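(* Let $A$ be a finite abelian group of even order and let $T$ be a square-free subset of $A$ with $|T|=|A|/2-1$. If $|T-T^0|<|A|$, where $T^0=T\cup\{0\}$, then $\mathrm{CayS}(A,T)$ admits a perfect code.
   Context: $A$ is written additively with identity $0$. An element $x$ of $A$ is a square if $x=2y$ for some $y\in A$; a subset is square-free if it contains no squares. For a square-free $T\subseteq A$, the Cayley sum graph $\mathrm{CayS}(A,T)$ is the simple graph with vertex set $A$ in which distinct $x,y$ are adjacent iff $x+y\in T$. A subset $C$ of the vertex set of a graph is a perfect code if every vertex is at distance at most one from exactly one vertex of $C$. For $B,C\subseteq A$, $B-C=\{b-c:b\in B,c\in C\}$. *)

theory Defs
  imports Main
begin

(* The finite abelian group A is the universe of a type 'a :: {ab_group_add, finite}. *)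

definition is_square :: "'a::ab_group_add \<Rightarrow> bool" where
  "is_square x \<longleftrightarrow> (\<exists>y. x = y + y)"

definition square_free :: "'a::ab_group_add set \<Rightarrow> bool" where
  "square_free T \<longleftrightarrow> (\<forall>x\<in>T. \<not> is_square x)"

definition cays_adj :: "'a::ab_group_add set \<Rightarrow> 'a \<Rightarrow> 'a \<Rightarrow> bool" where
  "cays_adj T x y \<longleftrightarrow> x \<noteq> y \<and> x + y \<in> T"

definition cays_perfect_code :: "'a::ab_group_add set \<Rightarrow> 'a set \<Rightarrow> bool" where
  "cays_perfect_code T C \<longleftrightarrow>
     (\<forall>v. \<exists>!c. c \<in> C \<and> (c = v \<or> cays_adj T v c))"

definition set_diff_group :: "'a::ab_group_add set \<Rightarrow> 'a set \<Rightarrow> 'a set" where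
  "set_diff_group B C = {b - c | b c. b \<in> B \<and> c \<in> C}"

end

theory Submission
  imports Defs
begin

theorem corollary2p8:
  fixes T :: "'a::{ab_group_add, finite} set"
  assumes "even (card (UNIV :: 'a set))"
    and "square_free T"
    and "card T = card (UNIV :: 'a set) div 2 - 1"
    and "card (set_diff_group T (insert 0 T)) < card (UNIV :: 'a set)"
  shows "\<exists>C. cays_perfect_code T C"
proof -
  let ?n = "card (UNIV :: 'a set)"
  let ?S = "set_diff_group T (insert 0 T)"
  have npos: "?n > 0" by (simp add: finite_UNIV_card_ge_0)
  have n2: "?n \<ge> 2" using assms(1) npos by (cases "?n = 1") auto
  define N where "N c = {v. v = c \<or> (v \<noteq> c \<and> v + c \<in> T)}" for c :: 'a
  have sq: "c + c \<notin> T" for c :: 'a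
    using assms(2) unfolding square_free_def is_square_def by blast
  have Neq: "N c = insert c ((\<lambda>t. t - c) ` T)" for c
  proof -
    have "v \<in> N c \<longleftrightarrow> v \<in> insert c ((\<lambda>t. t - c) ` T)" for v
    proof
      assume "v \<in> N c" then show "v \<in> insert c ((\<lambda>t. t - c) ` T)"
        unfolding N_def by (auto simp: image_iff intro!: bexI[of _ "v + c"])
    next
      assume "v \<in> insert c ((\<lambda>t. t - c) ` T)"
      then show "v \<in> N c" unfolding N_def using sq[of c] by auto
    qed
    then show ?thesis by blast
  qed
  have cardN: "card (N c) = ?n div 2" for c
  proof -
    have "c \<notin> (\<lambda>t. t - c) ` T"
    proof
      assume "c \<in> (\<lambda>t. t - c) ` T"
      then obtain t where "t \<in> T" "c = t - c" by blast
      then have "t = c + c" by (simp add: algebra_simps)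
      with \<open>t \<in> T\<close> sq show False by blast
    qed
    moreover have "card ((\<lambda>t. t - c) ` T) = card T"
      by (rule card_image) (auto simp: inj_on_def)
    ultimately show ?thesis using Neq[of c] assms(3) n2 by simp
  qed
  obtain d where d: "d \<notin> ?S" "d \<noteq> 0"
  proof -
    have "card (insert 0 ?S) < ?n"
    proof (cases "T = {}")
      case True
      then have "?S = {}" unfolding set_diff_group_def by auto
      then show ?thesis using n2 by simp
    next
      case False
      then obtain t where "t \<in> T" by blast
      then have "0 \<in> ?S" unfolding set_diff_group_def by force
      then show ?thesis using assms(4) by (simp add: insert_absorb)
    qed
    then have "insert 0 ?S \<noteq> UNIV" by auto
    then show ?thesis using that by blast
  qed
  have disj: "N 0 \<inter> N d = {}"
  proof (rule ccontr)
    assume "N 0 \<inter> N d \<noteq> {}"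
    then obtain v where v0: "v \<in> N 0" and vd: "v \<in> insert d ((\<lambda>t. t - d) ` T)"
      using Neq[of d] by blast
    have v0': "v = 0 \<or> v \<in> T" using v0 unfolding N_def by auto
    show False
    proof (cases "v = d")
      case True
      then have "d \<in> T" using v0' d(2) by auto
      then have "d - 0 \<in> ?S" unfolding set_diff_group_def by blast
      then show False using d by simp
    next
      case False
      then obtain t where t: "t \<in> T" "v = t - d" using vd by auto
      then have "d = t - v" by (simp add: algebra_simps)
      moreover have "v \<in> insert 0 T" using v0' by auto
      ultimately have "d \<in> ?S" using t unfolding set_diff_group_def by blast
      then show False using d by simp
    qed
  qed
  have cov: "N 0 \<union> N d = UNIV"
  proof -
    have "card (N 0 \<union> N d) = ?n div 2 + ?n div 2"
      using card_Un_disjoint[of "N 0" "N d"] disj cardN by simp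
    also have "\<dots> = ?n" using assms(1) by auto
    finally show ?thesis by (simp add: card_subset_eq)
  qed
  have "cays_perfect_code T {0, d}"
    unfolding cays_perfect_code_def
  proof
    fix v
    have mem: "(c = v \<or> cays_adj T v c) \<longleftrightarrow> v \<in> N c" for c
      unfolding N_def cays_adj_def by (auto simp: add.commute)
    show "\<exists>!c. c \<in> {0, d} \<and> (c = v \<or> cays_adj T v c)"
      unfolding mem using cov disj by blast
  qed
  then show ?thesis by blast
qed

end
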